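(* For every (finite, simple, undirected) graph $G$ with at least two vertices, $\kappa_2(\overleftrightarrow{G})=\kappa(G)$.
   Context: $\overleftrightarrow{G}$ denotes the complete biorientation of $G$: the digraph with vertex set $V(G)$ obtained by replacing each edge $xy$ of $G$ by the two arcs $xy$ and $yx$. For distinct vertices $x,y$ of $G$, $\kappa_{\{x,y\}}(G)$ is the maximum number of internally disjoint $x$–$y$ paths in $G$, and $\kappa(G)=\min\{\kappa_{\{x,y\}}(G): x,y\in V(G), x\ne y\}$ (so $\kappa(G)=0$ if $G$ is disconnected). A digraph is strong if for every ordered pair of vertices $u,v$ there is a directed path from $u$ to $v$. For a digraph $D$ and $S\subseteq V(D)$, strong subgraphs $D_1,\dots,D_p$ each containing $S$ are $S$-internally disjoint if $V(D_i)\cap V(D_j)=S$ and $A(D_i)\cap A(D_j)=\emptyset$ for $i<j$; $\kappa_S(D)$ is the maximum number of such subgraphs, and $\kappa_2(D)=\min\{\kappa_S(D): S\subseteq V(D), |S|=2\}$. *)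

theory Defs
  imports Main
begin

type_synonym 'a graph = "'a set \<times> 'a set set"
type_synonym 'a digraph = "'a set \<times> ('a \<times> 'a) set"

definition simple_graph :: "'a graph \<Rightarrow> bool" where
  "simple_graph G \<longleftrightarrow> finite (fst G) \<and>
     snd G \<subseteq> {{x, y} | x y. x \<in> fst G \<and> y \<in> fst G \<and> x \<noteq> y}"

definition is_path :: "'a graph \<Rightarrow> 'a \<Rightarrow> 'a \<Rightarrow> 'a list \<Rightarrow> bool" where
  "is_path G x y p \<longleftrightarrow> p \<noteq> [] \<and> hd p = x \<and> last p = y \<and> distinct p \<and>
     set p \<subseteq> fst G \<and> (\<forall>i < length p - 1. {p ! i, p ! Suc i} \<in> snd G)"

definition int_disjoint_paths :: "'a graph \<Rightarrow> 'a \<Rightarrow> 'a \<Rightarrow> 'a list set \<Rightarrow> bool" where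
  "int_disjoint_paths G x y P \<longleftrightarrow> finite P \<and> (\<forall>p\<in>P. is_path G x y p) \<and>
     (\<forall>p\<in>P. \<forall>q\<in>P. p \<noteq> q \<longrightarrow> set p \<inter> set q = {x, y})"

definition kappa_pair :: "'a graph \<Rightarrow> 'a \<Rightarrow> 'a \<Rightarrow> nat" where
  "kappa_pair G x y = Max {card P | P. int_disjoint_paths G x y P}"

definition kappa :: "'a graph \<Rightarrow> nat" where
  "kappa G = Min {kappa_pair G x y | x y. x \<in> fst G \<and> y \<in> fst G \<and> x \<noteq> y}"

definition biorient :: "'a graph \<Rightarrow> 'a digraph" where
  "biorient G = (fst G, {(x, y). {x, y} \<in> snd G})"

definition strong_subgraph :: "'a digraph \<Rightarrow> 'a digraph \<Rightarrow> bool" where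
  "strong_subgraph D H \<longleftrightarrow> fst H \<subseteq> fst D \<and> snd H \<subseteq> snd D \<inter> (fst H \<times> fst H) \<and>
     (\<forall>u\<in>fst H. \<forall>v\<in>fst H. (u, v) \<in> (snd H)\<^sup>*)"

definition S_int_disjoint :: "'a digraph \<Rightarrow> 'a set \<Rightarrow> nat \<Rightarrow> (nat \<Rightarrow> 'a digraph) \<Rightarrow> bool" where
  "S_int_disjoint D S p Ds \<longleftrightarrow>
     (\<forall>i<p. strong_subgraph D (Ds i) \<and> S \<subseteq> fst (Ds i)) \<and>
     (\<forall>i<p. \<forall>j<p. i < j \<longrightarrow> fst (Ds i) \<inter> fst (Ds j) = S \<and> snd (Ds i) \<inter> snd (Ds j) = {})"

definition kappa_S :: "'a digraph \<Rightarrow> 'a set \<Rightarrow> nat" where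
  "kappa_S D S = Max {p. \<exists>Ds. S_int_disjoint D S p Ds}"

definition kappa2 :: "'a digraph \<Rightarrow> nat" where
  "kappa2 D = Min {kappa_S D S | S. S \<subseteq> fst D \<and> card S = 2}"

end

theory Submission
  imports Defs
begin

lemma is_path_succ:
  "is_path G x y p \<longleftrightarrow> p \<noteq> [] \<and> hd p = x \<and> last p = y \<and> distinct p \<and>
     set p \<subseteq> fst G \<and> successively (\<lambda>u v. {u, v} \<in> snd G) p"
  unfolding is_path_def successively_conv_nth
  by (metis Suc_eq_plus1 less_diff_conv)

fun parcs :: "'a list \<Rightarrow> ('a \<times> 'a) set" where
  "parcs (a # b # xs) = {(a, b), (b, a)} \<union> parcs (b # xs)"
| "parcs _ = {}"

lemma parcs_sub: "parcs q \<subseteq> set q \<times> set q"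
  by (induction q rule: parcs.induct) auto

lemma parcs_E: "successively (\<lambda>u v. {u, v} \<in> E) q \<Longrightarrow> parcs q \<subseteq> {(u, v). {u, v} \<in> E}"
  by (induction q rule: parcs.induct) (auto simp: insert_commute)

lemma parcs_strong: "u \<in> set q \<Longrightarrow> v \<in> set q \<Longrightarrow> (u, v) \<in> (parcs q)\<^sup>*"
proof (induction q arbitrary: u v rule: parcs.induct)
  case (1 a b xs)
  have mono: "(parcs (b # xs))\<^sup>* \<subseteq> (parcs (a # b # xs))\<^sup>*"
    by (rule rtrancl_mono) auto
  have ab: "(a, b) \<in> (parcs (a # b # xs))\<^sup>*" "(b, a) \<in> (parcs (a # b # xs))\<^sup>*" by auto
  have IH: "\<And>u v. u \<in> set (b # xs) \<Longrightarrow> v \<in> set (b # xs) \<Longrightarrow> (u, v) \<in> (parcs (a # b # xs))\<^sup>*"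
    using 1(1) mono by blast
  have b: "b \<in> set (b # xs)" by simp
  show ?case
  proof (cases "u = a")
    case True
    then show ?thesis
    proof (cases "v = a")
      case False
      then have "v \<in> set (b # xs)" using 1 by auto
      then show ?thesis using True ab IH[OF b] by (meson rtrancl_trans)
    qed simp
  next
    case False
    then have u: "u \<in> set (b # xs)" using 1 by auto
    show ?thesis
    proof (cases "v = a")
      case True
      then show ?thesis using ab IH[OF u b] by (meson rtrancl_trans)
    next
      case False
      then have "v \<in> set (b # xs)" using 1 by auto
      then show ?thesis using IH[OF u] by blast
    qed
  qed
qed auto

lemma parcs_irr: "distinct q \<Longrightarrow> (u, u) \<notin> parcs q"
  by (induction q rule: parcs.induct) auto

lemma parcs_xy:
  assumes "distinct q" "hd q = x" "last q = y" "(x, y) \<in> parcs q \<or> (y, x) \<in> parcs q"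
  shows "q = [x, y]"
proof -
  obtain a b rest where q: "q = a # b # rest"
    using assms(4) by (cases q rule: parcs.cases) auto
  have a: "a = x" using q assms(2) by simp
  have xn: "x \<notin> set (b # rest)" using assms(1) q a by auto
  have "(x, y) \<notin> parcs (b # rest) \<and> (y, x) \<notin> parcs (b # rest)"
    using parcs_sub[of "b # rest"] xn by blast
  then have "b = y" using assms(4) q a by auto
  moreover have "rest = []"
  proof (rule ccontr)
    assume "rest \<noteq> []"
    then have "last q \<in> set rest" using q by simp
    then show False using assms(1,3) q \<open>b = y\<close> by auto
  qed
  ultimately show ?thesis using q a by simp
qed

lemma two_path:
  assumes "distinct q" "set q \<subseteq> {x, y}" "q \<noteq> []" "hd q = x" "last q = y" "x \<noteq> y"
  shows "q = [x, y]"
proof -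
  have "length q \<le> 2"
    using assms(1,2) by (metis card_2_iff card_mono distinct_card finite.emptyI finite.insertI
        assms(6) )
  then show ?thesis using assms
    by (cases q rule: parcs.cases) (auto simp: le_Suc_eq)
qed

lemma walk_path:
  assumes "(x, y) \<in> A\<^sup>*"
  shows "\<exists>p. p \<noteq> [] \<and> hd p = x \<and> last p = y \<and> distinct p \<and> successively (\<lambda>u v. (u, v) \<in> A) p"
  using assms
proof (induction rule: converse_rtrancl_induct)
  case base
  then show ?case by (intro exI[of _ "[y]"]) auto
next
  case (step x z)
  then obtain p where p: "p \<noteq> []" "hd p = z" "last p = y" "distinct p"
    "successively (\<lambda>u v. (u, v) \<in> A) p" by blast
  show ?case
  proof (cases "x \<in> set p")
    case True
    then obtain ys zs where pe: "p = ys @ x # zs" by (meson split_list)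
    show ?thesis
      apply (intro exI[of _ "x # zs"])
      using p pe by (auto simp: successively_append_iff)
  next
    case False
    show ?thesis
      apply (intro exI[of _ "x # p"])
      using p False step(1) by (auto simp: successively_Cons)
  qed
qed

lemma succ_set:
  "successively (\<lambda>u v. (u, v) \<in> A) (a # p) \<Longrightarrow> a \<in> V \<Longrightarrow> A \<subseteq> V \<times> V \<Longrightarrow> set (a # p) \<subseteq> V"
  by (induction p arbitrary: a) (auto simp: successively_Cons)

lemma dir1:
  assumes "int_disjoint_paths G x y P"
  shows "\<exists>Ds. S_int_disjoint (biorient G) {x, y} (card P) Ds"
proof -
  have fin: "finite P" using assms unfolding int_disjoint_paths_def by blast
  obtain f where f: "bij_betw f {0..<card P} P" using ex_bij_betw_nat_finite[OF fin] by blast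
  define Ds where "Ds = (\<lambda>i. (set (f i), parcs (f i)))"
  have fP: "\<And>i. i < card P \<Longrightarrow> f i \<in> P" using f bij_betwE by fastforce
  have path: "\<And>i. i < card P \<Longrightarrow> is_path G x y (f i)"
    using fP assms unfolding int_disjoint_paths_def by blast
  show ?thesis
  proof (intro exI[of _ Ds], unfold S_int_disjoint_def, intro conjI allI impI)
    fix i assume i: "i < card P"
    have pi: "f i \<noteq> []" "hd (f i) = x" "last (f i) = y" "distinct (f i)" "set (f i) \<subseteq> fst G"
       "successively (\<lambda>u v. {u, v} \<in> snd G) (f i)"
      using path[OF i] unfolding is_path_succ by auto
    show "strong_subgraph (biorient G) (Ds i)"
      unfolding strong_subgraph_def Ds_def biorient_def
      using pi parcs_sub[of "f i"] parcs_E[OF pi(6)] parcs_strong[of _ "f i"] by auto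
    show "{x, y} \<subseteq> fst (Ds i)" unfolding Ds_def using pi
      by (metis empty_subsetI fst_conv hd_in_set insert_subset last_in_set)
  next
    fix i j assume ij: "i < card P" "j < card P" "i < j"
    have ne: "f i \<noteq> f j" using f ij unfolding bij_betw_def inj_on_def by (metis atLeastLessThan_iff less_irrefl zero_le)
    have V: "set (f i) \<inter> set (f j) = {x, y}"
      using assms fP[OF ij(1)] fP[OF ij(2)] ne unfolding int_disjoint_paths_def by blast
    then show "fst (Ds i) \<inter> fst (Ds j) = {x, y}" unfolding Ds_def by simp
    show "snd (Ds i) \<inter> snd (Ds j) = {}"
    proof (rule ccontr)
      assume "snd (Ds i) \<inter> snd (Ds j) \<noteq> {}"
      then obtain u v where uv: "(u, v) \<in> parcs (f i)" "(u, v) \<in> parcs (f j)"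
        unfolding Ds_def by auto
      have "u \<in> {x, y}" "v \<in> {x, y}" using uv parcs_sub V by blast+
      moreover have "u \<noteq> v"
      proof
        assume "u = v"
        have "distinct (f i)" using path[OF ij(1)] unfolding is_path_def by blast
        then show False using uv(1) \<open>u = v\<close> parcs_irr by metis
      qed
      ultimately have c: "(u = x \<and> v = y) \<or> (u = y \<and> v = x)" by blast
      have "(x, y) \<in> parcs (f i) \<or> (y, x) \<in> parcs (f i)"
        "(x, y) \<in> parcs (f j) \<or> (y, x) \<in> parcs (f j)" using uv c by auto
      moreover have "distinct (f i)" "hd (f i) = x" "last (f i) = y"
        "distinct (f j)" "hd (f j) = x" "last (f j) = y"
        using path[OF ij(1)] path[OF ij(2)] unfolding is_path_def by blast+
      ultimately have "f i = [x, y]" "f j = [x, y]"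
        using parcs_xy by metis+
      then show False using ne by simp
    qed
  qed
qed


lemma succ_set':
  assumes "successively (\<lambda>u v. (u, v) \<in> A) q" "q \<noteq> []" "hd q \<in> V" "A \<subseteq> V \<times> V"
  shows "set q \<subseteq> V"
  using assms succ_set[of A "hd q" "tl q" V] by (cases q) auto

lemma dir2:
  assumes "S_int_disjoint (biorient G) {x, y} p Ds" "x \<noteq> y"
  shows "\<exists>P. int_disjoint_paths G x y P \<and> card P = p"
proof -
  define Q where "Q = (\<lambda>i q. q \<noteq> [] \<and> hd q = x \<and> last q = y \<and> distinct q \<and>
     successively (\<lambda>u v. (u, v) \<in> snd (Ds i)) q)"
  define \<pi> where "\<pi> = (\<lambda>i. SOME q. Q i q)"
  have ss: "\<And>i. i < p \<Longrightarrow> strong_subgraph (biorient G) (Ds i) \<and> {x, y} \<subseteq> fst (Ds i)"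
    using assms(1) unfolding S_int_disjoint_def by blast
  have Qp: "\<And>i. i < p \<Longrightarrow> Q i (\<pi> i)"
  proof -
    fix i assume i: "i < p"
    have "(x, y) \<in> (snd (Ds i))\<^sup>*" using ss[OF i] unfolding strong_subgraph_def by blast
    then have "\<exists>q. Q i q" unfolding Q_def by (rule walk_path)
    then show "Q i (\<pi> i)" unfolding \<pi>_def by (rule someI_ex)
  qed
  have setp: "\<And>i. i < p \<Longrightarrow> set (\<pi> i) \<subseteq> fst (Ds i)"
  proof -
    fix i assume i: "i < p"
    show "set (\<pi> i) \<subseteq> fst (Ds i)"
      apply (rule succ_set'[of "snd (Ds i)"])
      using Qp[OF i] ss[OF i] unfolding Q_def strong_subgraph_def by auto
  qed
  have path: "\<And>i. i < p \<Longrightarrow> is_path G x y (\<pi> i)"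
  proof -
    fix i assume i: "i < p"
    have sub: "snd (Ds i) \<subseteq> {(u, v). {u, v} \<in> snd G}" "fst (Ds i) \<subseteq> fst G"
      using ss[OF i] unfolding strong_subgraph_def biorient_def by auto
    have "successively (\<lambda>u v. {u, v} \<in> snd G) (\<pi> i)"
      using Qp[OF i] sub(1) unfolding Q_def by (auto elim!: successively_mono)
    then show "is_path G x y (\<pi> i)" unfolding is_path_succ
      using Qp[OF i] setp[OF i] sub(2) unfolding Q_def by auto
  qed
  have xy_arc: "\<And>i. i < p \<Longrightarrow> \<pi> i = [x, y] \<Longrightarrow> (x, y) \<in> snd (Ds i)"
  proof -
    fix i assume i: "i < p" "\<pi> i = [x, y]"
    have "successively (\<lambda>u v. (u, v) \<in> snd (Ds i)) [x, y]"
      using Qp[OF i(1)] i(2) unfolding Q_def by metis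
    then show "(x, y) \<in> snd (Ds i)" by simp
  qed
  have disj: "\<And>i j. i < p \<Longrightarrow> j < p \<Longrightarrow> i \<noteq> j \<Longrightarrow>
      fst (Ds i) \<inter> fst (Ds j) = {x, y} \<and> snd (Ds i) \<inter> snd (Ds j) = {}"
  proof -
    fix i j assume ij: "i < p" "j < p" "i \<noteq> j"
    show "fst (Ds i) \<inter> fst (Ds j) = {x, y} \<and> snd (Ds i) \<inter> snd (Ds j) = {}"
    proof (cases "i < j")
      case True then show ?thesis using assms(1) ij unfolding S_int_disjoint_def by blast
    next
      case False then have "j < i" using ij by simp
      then show ?thesis using assms(1) ij unfolding S_int_disjoint_def by blast
    qed
  qed
  have inj: "inj_on \<pi> {..<p}"
  proof (rule inj_onI, rule ccontr)
    fix i j assume ij: "i \<in> {..<p}" "j \<in> {..<p}" "\<pi> i = \<pi> j" "i \<noteq> j"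
    have "set (\<pi> i) \<subseteq> {x, y}" using setp[of i] setp[of j] ij disj[of i j] by auto
    then have "\<pi> i = [x, y]" using two_path[of "\<pi> i" x y] Qp[of i] ij assms(2) unfolding Q_def by blast
    then have "(x, y) \<in> snd (Ds i)" "(x, y) \<in> snd (Ds j)" using xy_arc ij by auto
    then show False using disj[of i j] ij by auto
  qed
  define P where "P = \<pi> ` {..<p}"
  have "int_disjoint_paths G x y P"
    unfolding int_disjoint_paths_def
  proof (intro conjI ballI impI)
    show "finite P" unfolding P_def by simp
  next
    fix q assume "q \<in> P" then show "is_path G x y q" using path unfolding P_def by auto
  next
    fix q r assume qr: "q \<in> P" "r \<in> P" "q \<noteq> r"
    then obtain i j where ij: "i < p" "j < p" "q = \<pi> i" "r = \<pi> j" unfolding P_def by auto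
    then have "i \<noteq> j" using qr by auto
    have "set q \<inter> set r \<subseteq> {x, y}" using setp ij disj[OF ij(1,2) \<open>i \<noteq> j\<close>] by blast
    moreover have "{x, y} \<subseteq> set q" "{x, y} \<subseteq> set r" using Qp ij unfolding Q_def
      by (metis empty_subsetI hd_in_set insert_subset last_in_set)+
    ultimately show "set q \<inter> set r = {x, y}" by blast
  qed
  moreover have "card P = p" unfolding P_def using card_image[OF inj] by simp
  ultimately show ?thesis by blast
qed

lemma pair_eq:
  assumes "x \<noteq> y"
  shows "kappa_S (biorient G) {x, y} = kappa_pair G x y"
proof -
  have "{card P | P. int_disjoint_paths G x y P} = {p. \<exists>Ds. S_int_disjoint (biorient G) {x, y} p Ds}"
    using dir1[of G x y] dir2[OF _ assms] by blast
  then show ?thesis unfolding kappa_S_def kappa_pair_def by simp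
qed

theorem theorem2p5:
  fixes G :: "'a graph"
  assumes "simple_graph G" and "card (fst G) \<ge> 2"
  shows "kappa2 (biorient G) = kappa G"
proof -
  have "{kappa_S (biorient G) S | S. S \<subseteq> fst (biorient G) \<and> card S = 2}
      = {kappa_pair G x y | x y. x \<in> fst G \<and> y \<in> fst G \<and> x \<noteq> y}"
  proof (intro set_eqI iffI)
    fix k assume "k \<in> {kappa_S (biorient G) S | S. S \<subseteq> fst (biorient G) \<and> card S = 2}"
    then obtain S where S: "k = kappa_S (biorient G) S" "S \<subseteq> fst G" "card S = 2"
      unfolding biorient_def by auto
    then obtain x y where "S = {x, y}" "x \<noteq> y" by (meson card_2_iff)
    moreover have "x \<in> fst G" "y \<in> fst G" using S(2) \<open>S = {x, y}\<close> by auto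
    moreover have "k = kappa_pair G x y" using S(1) \<open>S = {x, y}\<close> pair_eq[OF \<open>x \<noteq> y\<close>] by simp
    ultimately show "k \<in> {kappa_pair G x y | x y. x \<in> fst G \<and> y \<in> fst G \<and> x \<noteq> y}"
      by blast
  next
    fix k assume "k \<in> {kappa_pair G x y | x y. x \<in> fst G \<and> y \<in> fst G \<and> x \<noteq> y}"
    then obtain x y where xy: "k = kappa_pair G x y" "x \<in> fst G" "y \<in> fst G" "x \<noteq> y" by blast
    then have "k = kappa_S (biorient G) {x, y}" "{x, y} \<subseteq> fst (biorient G)" "card {x, y} = 2"
      using pair_eq[OF xy(4)] unfolding biorient_def by auto
    then show "k \<in> {kappa_S (biorient G) S | S. S \<subseteq> fst (biorient G) \<and> card S = 2}" by blast
  qed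
  then show ?thesis unfolding kappa2_def kappa_def by simp
qed

end
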